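(* Let $S_2=\mathrm{span}\langle e,f\rangle$ be the two-dimensional Lie triple system with $[e,f,e]=2e$, $[e,f,f]=-2f$, over a field of characteristic zero, and let $U(S_2)$ be its universal enveloping algebra. Then for all $n\ge 0$, $$(e^n,f,f)\,e=n\,e^nf-n(n-1)\,e^{n-1},$$ where $(x,y,z)=(xy)z-x(yz)$ and $e^nf$ denotes the product of $e^n$ with $f$.
   Context: A Lie triple system (L.t.s.) is a vector space $T$ with a trilinear product $[x,y,z]$ satisfying $[x,x,y]=0$, $[x,y,z]+[y,z,x]+[z,x,y]=0$, and $[a,b,[x,y,z]]=[[a,b,x],y,z]+[x,[a,b,y],z]+[x,y,[a,b,z]]$; the product on $S_2$ is determined by the given values together with these identities. For a unital nonassociative algebra $A$, $\mathrm{LN_{alt}}(A)=\{a\in A : (a,x,y)=-(x,a,y)\ \forall x,y\in A\}$ is an L.t.s. with $[a,b,c]=a(bc)-b(ac)-c(ab)+c(ba)$. The universal enveloping algebra $U(T)$ is the unital algebra with an L.t.s. monomorphism $T\to\mathrm{LN_{alt}}(U(T))$ (elements of $T$ identified with their images) such that $ab=ba$ for $a,b\in T$, universal for L.t.s. homomorphisms into $\mathrm{LN_{alt}}(A)$ with this commutation property. For $c\in T$ the subalgebra generated by $c$ is associative, so $c^n$ is well defined ($c^0=1$); for $n=0$ the term $n(n-1)e^{n-1}$ is $0$. *)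

theory Defs
  imports Main
begin

locale unital_algebra =
  fixes smul :: "'k::field \<Rightarrow> 'a::ab_group_add \<Rightarrow> 'a"
    and mul :: "'a \<Rightarrow> 'a \<Rightarrow> 'a"
    and one :: 'a
  assumes smul_add_right: "smul c (x + y) = smul c x + smul c y"
      and smul_add_left: "smul (c + d) x = smul c x + smul d x"
      and smul_smul: "smul c (smul d x) = smul (c * d) x"
      and smul_one: "smul 1 x = x"
      and mul_add_left: "mul (x + y) z = mul x z + mul y z"
      and mul_add_right: "mul x (y + z) = mul x y + mul x z"
      and mul_smul_left: "mul (smul c x) y = smul c (mul x y)"
      and mul_smul_right: "mul x (smul c y) = smul c (mul x y)"
      and mul_one_left: "mul one x = x"
      and mul_one_right: "mul x one = x"

definition nassoc :: "('a::ab_group_add \<Rightarrow> 'a \<Rightarrow> 'a) \<Rightarrow> 'a \<Rightarrow> 'a \<Rightarrow> 'a \<Rightarrow> 'a" where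
  "nassoc mul x y z = mul (mul x y) z - mul x (mul y z)"

definition LN_alt :: "('a::ab_group_add \<Rightarrow> 'a \<Rightarrow> 'a) \<Rightarrow> 'a set" where
  "LN_alt mul = {a. \<forall>x y. nassoc mul a x y = - nassoc mul x a y}"

definition ltsb :: "('a::ab_group_add \<Rightarrow> 'a \<Rightarrow> 'a) \<Rightarrow> 'a \<Rightarrow> 'a \<Rightarrow> 'a \<Rightarrow> 'a" where
  "ltsb mul a b c = mul a (mul b c) - mul b (mul a c) - mul c (mul a b) + mul c (mul b a)"

primrec npow :: "('a \<Rightarrow> 'a \<Rightarrow> 'a) \<Rightarrow> 'a \<Rightarrow> 'a \<Rightarrow> nat \<Rightarrow> 'a" where
  "npow mul one c 0 = one"
| "npow mul one c (Suc n) = mul c (npow mul one c n)"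

end

theory Submission
  imports Defs
begin

locale S2 = unital_algebra smul mul one
  for smul :: "'k::field_char_0 \<Rightarrow> 'a::ab_group_add \<Rightarrow> 'a" and mul one +
  fixes e f :: 'a
  assumes eL: "e \<in> LN_alt mul" and fL: "f \<in> LN_alt mul"
    and comm: "mul e f = mul f e"
    and bef: "ltsb mul e f e = smul 2 e"
    and bff: "ltsb mul e f f = - smul 2 f"
begin

lemma smul_zero_right[simp]: "smul c 0 = 0"
  using smul_add_right[of c 0 0] by simp
lemma smul_minus_right: "smul c (- x) = - smul c x"
proof -
  have "smul c x + smul c (- x) = 0" using smul_add_right[of c x "-x"] by simp
  thus ?thesis by (rule minus_unique[symmetric])
qed
lemma smul_diff_right: "smul c (x - y) = smul c x - smul c y"
  using smul_add_right[of c x "-y"] smul_minus_right[of c y] by simp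
lemma smul_zero_left[simp]: "smul 0 x = 0"
  using smul_add_left[of 0 0 x] by simp
lemma smul_minus_left: "smul (- c) x = - smul c x"
proof -
  have "smul c x + smul (- c) x = 0" using smul_add_left[of c "-c" x] by simp
  thus ?thesis by (rule minus_unique[symmetric])
qed
lemma smul_diff_left: "smul (c - d) x = smul c x - smul d x"
  using smul_add_left[of c "-d" x] smul_minus_left[of d x] by simp
lemma mul_zero_left[simp]: "mul 0 x = 0"
  using mul_add_left[of 0 0 x] by simp
lemma mul_zero_right[simp]: "mul x 0 = 0"
  using mul_add_right[of x 0 0] by simp
lemma mul_minus_left: "mul (- x) y = - mul x y"
proof -
  have "mul x y + mul (- x) y = 0" using mul_add_left[of x "-x" y] by simp
  thus ?thesis by (rule minus_unique[symmetric])
qed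
lemma mul_minus_right: "mul y (- x) = - mul y x"
proof -
  have "mul y x + mul y (- x) = 0" using mul_add_right[of y x "-x"] by simp
  thus ?thesis by (rule minus_unique[symmetric])
qed
lemma mul_diff_left: "mul (x - y) z = mul x z - mul y z"
  using mul_add_left[of x "-y" z] mul_minus_left[of y z] by simp
lemma mul_diff_right: "mul z (x - y) = mul z x - mul z y"
  using mul_add_right[of z x "-y"] mul_minus_right[of z y] by simp
lemma smul_two: "smul 2 x = x + x"
proof -
  have "smul (1 + 1) x = x + x" by (simp only: smul_add_left smul_one)
  moreover have "(1 + 1 :: 'k) = 2" by simp
  ultimately show ?thesis by simp
qed
lemma half2: fixes x :: 'a shows "smul (1/2) (x + x) = x"
proof -
  have "smul (1/2) (x + x) = smul (1/2) (smul 2 x)" by (simp only: smul_two)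
  also have "\<dots> = smul ((1/2) * 2) x" by (rule smul_smul)
  also have "\<dots> = x" by (simp add: smul_one)
  finally show ?thesis .
qed
lemma cancel2: fixes x y :: 'a assumes "x + x = y + y" shows "x = y"
  using half2[of x] half2[of y] assms by metis
lemma smul_of_nat_Suc: "smul (of_nat (Suc n)) x = x + smul (of_nat n) x"
  by (simp add: smul_add_left smul_one)

lemmas lin = smul_add_right smul_diff_right smul_minus_right smul_add_left smul_diff_left
  smul_minus_left smul_smul mul_add_left mul_add_right mul_diff_left mul_diff_right
  mul_minus_left mul_minus_right mul_smul_left mul_smul_right

lemma LNe: "mul (mul e x + mul x e) y = mul e (mul x y) + mul x (mul e y)"
proof -
  have "nassoc mul e x y = - nassoc mul x e y" using eL unfolding LN_alt_def by blast
  thus ?thesis unfolding nassoc_def by (simp add: mul_add_left algebra_simps)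
qed
lemma LNf: "mul (mul f x + mul x f) y = mul f (mul x y) + mul x (mul f y)"
proof -
  have "nassoc mul f x y = - nassoc mul x f y" using fL unfolding LN_alt_def by blast
  thus ?thesis unfolding nassoc_def by (simp add: mul_add_left algebra_simps)
qed

abbreviation E where "E n \<equiv> npow mul one e n"

lemma Epow: "E n = (mul e ^^ n) one" by (induct n) auto

lemma Lpow: "mul (E n) y = (mul e ^^ n) y"
proof (induct n arbitrary: y)
  case 0 show ?case by (simp add: mul_one_left)
next
  case (Suc n)
  have h1: "mul e (E n) = E (Suc n)" by simp
  have h2: "mul (E n) e = E (Suc n)"
  proof -
    have "mul (E n) e = (mul e ^^ n) (mul e one)" using Suc[of e] by (simp add: mul_one_right)
    also have "\<dots> = (mul e ^^ Suc n) one" by (simp only: funpow_Suc_right comp_apply)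
    also have "\<dots> = E (Suc n)" by (simp only: Epow)
    finally show ?thesis .
  qed
  have "mul (E (Suc n) + E (Suc n)) y = mul e (mul (E n) y) + mul (E n) (mul e y)"
    using LNe[of "E n" y] by (simp only: h1 h2)
  also have "\<dots> = mul e ((mul e ^^ n) y) + (mul e ^^ n) (mul e y)"
    by (simp only: Suc)
  also have "\<dots> = (mul e ^^ Suc n) y + (mul e ^^ Suc n) y"
  proof -
    have a: "(mul e ^^ Suc n) y = mul e ((mul e ^^ n) y)" by simp
    have b: "(mul e ^^ Suc n) y = (mul e ^^ n) (mul e y)" by (simp only: funpow_Suc_right comp_apply)
    show ?thesis by (simp only: a[symmetric] b[symmetric])
  qed
  finally have "mul (E (Suc n)) y + mul (E (Suc n)) y = (mul e ^^ Suc n) y + (mul e ^^ Suc n) y"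
    by (simp only: mul_add_left)
  then show ?case by (rule cancel2)
qed

lemma ESuc: "mul (E (Suc j)) x = mul e (mul (E j) x)"
proof -
  have "mul (E (Suc j)) x = (mul e ^^ Suc j) x" by (rule Lpow)
  also have "\<dots> = mul e (mul (E j) x)" by (simp only: Lpow funpow.simps comp_apply)
  finally show ?thesis .
qed

lemma EE: "mul (E m) (E j) = E (m + j)"
proof -
  have "mul (E m) (E j) = (mul e ^^ m) (E j)" by (rule Lpow)
  also have "\<dots> = E (m + j)" by (simp only: Epow funpow_add comp_apply)
  finally show ?thesis .
qed

lemma Es: "mul e (E n) = E (Suc n)" by simp
lemma E1: "E (Suc 0) = e" by (simp add: mul_one_right)

declare npow.simps(2)[simp del]

definition D where "D x = mul e (mul f x) - mul f (mul e x)"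

lemma Dkey: "mul ((mul e (mul f x + mul x f) + mul (mul f x + mul x f) e)
      - (mul f (mul e x + mul x e) + mul (mul e x + mul x e) f)) y
    = D (mul x y) - mul x (D y)"
proof -
  have "mul ((mul e (mul f x + mul x f) + mul (mul f x + mul x f) e)
      - (mul f (mul e x + mul x e) + mul (mul e x + mul x e) f)) y
    = (mul e (mul (mul f x + mul x f) y) + mul (mul f x + mul x f) (mul e y))
      - (mul f (mul (mul e x + mul x e) y) + mul (mul e x + mul x e) (mul f y))"
    by (simp only: mul_diff_left LNe[of "mul f x + mul x f" y] LNf[of "mul e x + mul x e" y])
  also have "\<dots> = D (mul x y) - mul x (D y)"
    apply (simp only: LNe[of x y] LNf[of x y] LNe[of x "mul f y"] LNf[of x "mul e y"] D_def mul_add_right mul_diff_right)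
    apply simp
    done
  finally show ?thesis .
qed

lemma Dder: "D (mul x y) = mul (D x) y + mul x (D y)"
proof -
  have "D one = 0" by (simp add: D_def mul_one_right comm)
  then have "mul ((mul e (mul f x + mul x f) + mul (mul f x + mul x f) e)
      - (mul f (mul e x + mul x e) + mul (mul e x + mul x e) f)) one = D x"
    using Dkey[of x one] by (simp add: mul_one_right)
  then have hW: "(mul e (mul f x + mul x f) + mul (mul f x + mul x f) e)
      - (mul f (mul e x + mul x e) + mul (mul e x + mul x e) f) = D x"
    by (simp only: mul_one_right)
  have "mul (D x) y = D (mul x y) - mul x (D y)" using Dkey[of x y] unfolding hW .
  then show ?thesis by simp
qed

lemma De: "D e = smul 2 e" using bef by (simp add: ltsb_def D_def comm)
lemma Df: "D f = - smul 2 f" using bff by (simp add: ltsb_def D_def comm)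

lemma DE: "D (E n) = smul (2 * of_nat n) (E n)"
proof (induct n)
  case 0 show ?case by (simp add: D_def mul_one_right comm)
next
  case (Suc n)
  have "D (E (Suc n)) = mul (D e) (E n) + mul e (D (E n))" unfolding npow.simps(2) by (rule Dder)
  also have "\<dots> = smul 2 (E (Suc n)) + smul (2 * of_nat n) (E (Suc n))"
    using Suc by (simp add: De mul_smul_left mul_smul_right Es)
  also have "\<dots> = smul (2 + 2 * of_nat n) (E (Suc n))"
    by (simp only: smul_add_left)
  also have "(2 + 2 * of_nat n :: 'k) = 2 * of_nat (Suc n)" by simp
  finally show ?case .
qed


lemma fE: "mul f (E (Suc j)) = mul (E (Suc j)) f - smul (of_nat (Suc j) * of_nat j) (E j)"
proof (induct j)
  case 0 show ?case by (simp add: E1 comm)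
next
  case (Suc j)
  have d: "D (E (Suc j)) = mul e (mul f (E (Suc j))) - mul f (E (Suc (Suc j)))"
    by (simp add: D_def Es)
  have "mul f (E (Suc (Suc j))) = mul e (mul f (E (Suc j))) - smul (2 * of_nat (Suc j)) (E (Suc j))"
    using d DE[of "Suc j"] by (simp add: algebra_simps)
  also have "mul e (mul f (E (Suc j))) = mul (E (Suc (Suc j))) f - smul (of_nat (Suc j) * of_nat j) (E (Suc j))"
    using Suc by (simp add: mul_diff_right mul_smul_right ESuc Es)
  finally have "mul f (E (Suc (Suc j))) = mul (E (Suc (Suc j))) f - (smul (of_nat (Suc j) * of_nat j) (E (Suc j)) + smul (2 * of_nat (Suc j)) (E (Suc j)))"
    by (simp add: algebra_simps)
  also have "smul (of_nat (Suc j) * of_nat j) (E (Suc j)) + smul (2 * of_nat (Suc j)) (E (Suc j))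
     = smul (of_nat (Suc (Suc j)) * of_nat (Suc j)) (E (Suc j))"
  proof -
    have "(of_nat (Suc j) * of_nat j + 2 * of_nat (Suc j) :: 'k) = of_nat (Suc (Suc j)) * of_nat (Suc j)"
      by (simp add: algebra_simps)
    then show ?thesis by (metis smul_add_left)
  qed
  finally show ?case .
qed


lemma lincomb:
  fixes M Y :: 'a
  assumes "a + b - d = p + p"
  shows "M - smul a Y + (M - smul b Y) + smul d Y = (M - smul p Y) + (M - smul p Y)"
proof -
  have h: "smul a Y + smul b Y - smul d Y = smul p Y + smul p Y"
    by (metis assms smul_add_left smul_diff_left)
  have "M - smul a Y + (M - smul b Y) + smul d Y = M + M - (smul a Y + smul b Y - smul d Y)"
    by (simp add: algebra_simps)
  also have "\<dots> = (M - smul p Y) + (M - smul p Y)" by (simp add: h algebra_simps)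
  finally show ?thesis .
qed

lemma Qk: "\<forall>i. mul (mul (E k) f) (E (Suc i))
   = mul (E (Suc i + k)) f - smul (of_nat (Suc i) * of_nat (i + k)) (E (i + k))"
proof (induct k)
  case 0 show ?case by (simp add: mul_one_left fE)
next
  case (Suc k)
  show ?case
  proof
    fix i
    let ?y = "mul (E k) f"
    let ?Z = "mul (E (Suc k)) f"
    have h1: "mul e ?y = ?Z" by (simp add: ESuc)
    have h2: "mul ?y e = ?Z - smul (of_nat k) (E k)"
      using Suc[rule_format, of 0] by (simp add: E1)
    have "mul (mul e ?y + mul ?y e) (E (Suc i)) = mul e (mul ?y (E (Suc i))) + mul ?y (mul e (E (Suc i)))"
      by (rule LNe)
    also have "\<dots> = mul e (mul (E (Suc i + k)) f - smul (of_nat (Suc i) * of_nat (i + k)) (E (i + k)))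
        + (mul (E (Suc (Suc i) + k)) f - smul (of_nat (Suc (Suc i)) * of_nat (Suc i + k)) (E (Suc i + k)))"
      using Suc[rule_format, of i] Suc[rule_format, of "Suc i"] by (simp add: Es)
    also have "\<dots> = (mul (E (Suc (Suc (i + k)))) f - smul (of_nat (Suc i) * of_nat (i + k)) (E (Suc (i + k))))
        + (mul (E (Suc (Suc (i + k)))) f - smul (of_nat (Suc (Suc i)) * of_nat (Suc (i + k))) (E (Suc (i + k))))"
      by (simp add: mul_diff_right mul_smul_right ESuc Es)
    finally have A: "mul (mul e ?y + mul ?y e) (E (Suc i)) = \<dots>" .
    have B: "mul (mul e ?y + mul ?y e) (E (Suc i)) = mul ?Z (E (Suc i)) + mul ?Z (E (Suc i))
        - smul (of_nat k) (E (Suc (i + k)))"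
      using EE[of k "Suc i"] by (simp add: h1 h2 mul_add_left mul_diff_left mul_smul_left algebra_simps)
    have C: "(mul (E (Suc (Suc (i + k)))) f - smul (of_nat (Suc i) * of_nat (i + k)) (E (Suc (i + k))))
        + (mul (E (Suc (Suc (i + k)))) f - smul (of_nat (Suc (Suc i)) * of_nat (Suc (i + k))) (E (Suc (i + k))))
        + smul (of_nat k) (E (Suc (i + k)))
      = (mul (E (Suc i + Suc k)) f - smul (of_nat (Suc i) * of_nat (i + Suc k)) (E (i + Suc k)))
      + (mul (E (Suc i + Suc k)) f - smul (of_nat (Suc i) * of_nat (i + Suc k)) (E (i + Suc k)))"
    proof -
      have "(of_nat (Suc i) * of_nat (i + k) + of_nat (Suc (Suc i)) * of_nat (Suc (i + k)) - of_nat k :: 'k)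
          = of_nat (Suc i) * of_nat (i + Suc k) + of_nat (Suc i) * of_nat (i + Suc k)"
        by (simp add: algebra_simps)
      from lincomb[OF this] show ?thesis by simp
    qed
    show "mul (mul (E (Suc k)) f) (E (Suc i))
      = mul (E (Suc i + Suc k)) f - smul (of_nat (Suc i) * of_nat (i + Suc k)) (E (i + Suc k))"
      apply (rule cancel2)
      using A B C by (metis diff_add_cancel)
  qed
qed


lemma Gn: "mul f (mul (E (Suc n)) f) - mul (E (Suc n)) (mul f f)
   = smul (of_nat (Suc n) * (2 - of_nat n)) (mul (E n) f)"
proof (induct n)
  case 0
  have "mul e (mul f f) - mul f (mul e f) = - smul 2 f" using Df by (simp add: D_def)
  then show ?case by (simp add: E1 mul_one_left algebra_simps)
next
  case (Suc n)
  let ?y = "mul (E (Suc n)) f"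
  have "mul f (mul (E (Suc (Suc n))) f) - mul (E (Suc (Suc n))) (mul f f)
      = mul f (mul e ?y) - mul e (mul (E (Suc n)) (mul f f))"
    by (simp add: ESuc[of "Suc n"])
  also have "\<dots> = mul e (mul f ?y - mul (E (Suc n)) (mul f f)) - D ?y"
    by (simp add: D_def mul_diff_right)
  also have "D ?y = smul (2 * of_nat (Suc n)) ?y - smul 2 ?y"
    by (simp add: Dder DE Df mul_smul_left mul_smul_right mul_minus_right)
  also have "mul e (mul f ?y - mul (E (Suc n)) (mul f f)) = smul (of_nat (Suc n) * (2 - of_nat n)) ?y"
    using Suc by (simp add: mul_smul_right ESuc)
  also have "smul (of_nat (Suc n) * (2 - of_nat n)) ?y - (smul (2 * of_nat (Suc n)) ?y - smul 2 ?y)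
      = smul (of_nat (Suc n) * (2 - of_nat n) - (2 * of_nat (Suc n) - 2)) ?y"
    by (simp only: smul_diff_left)
  also have "(of_nat (Suc n) * (2 - of_nat n) - (2 * of_nat (Suc n) - 2) :: 'k)
      = of_nat (Suc (Suc n)) * (2 - of_nat (Suc n))"
    by (simp add: algebra_simps)
  finally show ?case .
qed

lemma Nn: "nassoc mul (E (Suc m)) f f = smul (of_nat (Suc m)) (mul (E m) f)"
proof -
  let ?x = "E (Suc m)"
  let ?z = "mul (E m) f"
  have n1: "nassoc mul f ?x f = - nassoc mul ?x f f" using fL unfolding LN_alt_def by blast
  have "nassoc mul ?x f f + nassoc mul ?x f f = nassoc mul ?x f f - nassoc mul f ?x f"
    using n1 by simp
  also have "\<dots> = (mul (mul ?x f) f - mul ?x (mul f f))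
       - (mul (mul ?x f - smul (of_nat (Suc m) * of_nat m) (E m)) f - mul f (mul ?x f))"
    by (simp add: nassoc_def fE)
  also have "\<dots> = smul (of_nat (Suc m) * of_nat m) ?z + (mul f (mul ?x f) - mul ?x (mul f f))"
    by (simp add: mul_diff_left mul_smul_left algebra_simps)
  also have "\<dots> = smul (of_nat (Suc m) * of_nat m) ?z + smul (of_nat (Suc m) * (2 - of_nat m)) ?z"
    by (simp only: Gn)
  also have "\<dots> = smul (of_nat (Suc m) * of_nat m + of_nat (Suc m) * (2 - of_nat m)) ?z"
    by (simp only: smul_add_left)
  also have "(of_nat (Suc m) * of_nat m + of_nat (Suc m) * (2 - of_nat m) :: 'k) = of_nat (Suc m) + of_nat (Suc m)"
    by (simp add: algebra_simps)
  finally show ?thesis using cancel2 smul_add_left by metis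
qed

lemma main: "mul (nassoc mul (E n) f f) e
           = smul (of_nat n) (mul (E n) f)
             - smul (of_nat (n * (n - 1))) (E (n - 1))"
proof (cases n)
  case 0 then show ?thesis by (simp add: nassoc_def mul_one_left)
next
  case (Suc m)
  have q: "mul (mul (E m) f) e = mul (E (Suc m)) f - smul (of_nat m) (E m)"
    using Qk[of m, rule_format, of 0] by (simp add: E1)
  show ?thesis
    by (simp add: Suc Nn mul_smul_left q smul_diff_right smul_smul ring_distribs)
qed

end

theorem mainTheorem5:
  fixes smul :: "'k::field_char_0 \<Rightarrow> 'a::ab_group_add \<Rightarrow> 'a"
    and mul :: "'a \<Rightarrow> 'a \<Rightarrow> 'a"
    and one :: 'a
    and e f :: 'a
  assumes "unital_algebra smul mul one"
      and "e \<in> LN_alt mul" and "f \<in> LN_alt mul"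
      and "mul e f = mul f e"
      and "ltsb mul e f e = smul 2 e"
      and "ltsb mul e f f = - smul 2 f"
  shows "\<forall>n::nat. mul (nassoc mul (npow mul one e n) f f) e
           = smul (of_nat n) (mul (npow mul one e n) f)
             - smul (of_nat (n * (n - 1))) (npow mul one e (n - 1))"
proof -
  interpret S2 smul mul one e f
    using assms by (simp add: S2_def S2_axioms_def)
  show ?thesis using main by blast
qed

end
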